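(* Let $(H,\circ,N,\star,\boxdot)$ be a right bracoid, i.e. a right skew bracoid in which $(N,\star)$ is abelian. Then for every $h\in H$ the map $\beta(h):N\to N$, $\eta^{\beta(h)}=\overline{\eta}\star(\eta\boxdot h)\star\overline{(e_N\boxdot h)}$, is an endomorphism of the group $(N,\star)$.
   Context: For a group $(N,\star)$, $e_N$ denotes its identity and $\overline{\eta}$ the inverse of $\eta$. A right skew bracoid is a 5-tuple $(H,\circ,N,\star,\boxdot)$ where $(H,\circ)$ and $(N,\star)$ are groups and $\boxdot$ is a transitive right action of $(H,\circ)$ on the set $N$ such that $(\eta\star\mu)\boxdot h=(\eta\boxdot h)\star\overline{(e_N\boxdot h)}\star(\mu\boxdot h)$ for all $h\in H$, $\eta,\mu\in N$. *)

theory Defs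
  imports "HOL-Algebra.Group"
begin

definition transitive_right_action :: "('h, 'c) monoid_scheme \<Rightarrow> 'n set \<Rightarrow> ('n \<Rightarrow> 'h \<Rightarrow> 'n) \<Rightarrow> bool" where
  "transitive_right_action H S act \<longleftrightarrow>
     (\<forall>x\<in>S. \<forall>h\<in>carrier H. act x h \<in> S) \<and>
     (\<forall>x\<in>S. act x \<one>\<^bsub>H\<^esub> = x) \<and>
     (\<forall>x\<in>S. \<forall>g\<in>carrier H. \<forall>h\<in>carrier H. act (act x g) h = act x (g \<otimes>\<^bsub>H\<^esub> h)) \<and>
     (\<forall>x\<in>S. \<forall>y\<in>S. \<exists>h\<in>carrier H. act x h = y)"

definition right_skew_bracoid :: "('h, 'c) monoid_scheme \<Rightarrow> ('n, 'd) monoid_scheme \<Rightarrow> ('n \<Rightarrow> 'h \<Rightarrow> 'n) \<Rightarrow> bool" where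
  "right_skew_bracoid H N act \<longleftrightarrow>
     group H \<and> group N \<and> transitive_right_action H (carrier N) act \<and>
     (\<forall>h\<in>carrier H. \<forall>\<eta>\<in>carrier N. \<forall>\<mu>\<in>carrier N.
        act (\<eta> \<otimes>\<^bsub>N\<^esub> \<mu>) h =
          act \<eta> h \<otimes>\<^bsub>N\<^esub> inv\<^bsub>N\<^esub> (act \<one>\<^bsub>N\<^esub> h) \<otimes>\<^bsub>N\<^esub> act \<mu> h)"

definition right_bracoid :: "('h, 'c) monoid_scheme \<Rightarrow> ('n, 'd) monoid_scheme \<Rightarrow> ('n \<Rightarrow> 'h \<Rightarrow> 'n) \<Rightarrow> bool" where
  "right_bracoid H N act \<longleftrightarrow> right_skew_bracoid H N act \<and> comm_group N"

definition bracoid_beta :: "('n, 'd) monoid_scheme \<Rightarrow> ('n \<Rightarrow> 'h \<Rightarrow> 'n) \<Rightarrow> 'h \<Rightarrow> 'n \<Rightarrow> 'n" where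
  "bracoid_beta N act h = (\<lambda>\<eta>. inv\<^bsub>N\<^esub> \<eta> \<otimes>\<^bsub>N\<^esub> act \<eta> h \<otimes>\<^bsub>N\<^esub> inv\<^bsub>N\<^esub> (act \<one>\<^bsub>N\<^esub> h))"

end

theory Submission
  imports Defs
begin

theorem corollary2p9:
  fixes H :: "('h, 'c) monoid_scheme" and N :: "('n, 'd) monoid_scheme"
    and act :: "'n \<Rightarrow> 'h \<Rightarrow> 'n"
  assumes "right_bracoid H N act"
    and "h \<in> carrier H"
  shows "bracoid_beta N act h \<in> hom N N"
proof -
  have cg: "comm_group N" and sb: "right_skew_bracoid H N act"
    using assms(1) unfolding right_bracoid_def by auto
  interpret comm_group N by (rule cg)
  have tr: "transitive_right_action H (carrier N) act"
    and hom: "\<And>\<eta> \<mu>. \<eta> \<in> carrier N \<Longrightarrow> \<mu> \<in> carrier N \<Longrightarrow>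
        act (\<eta> \<otimes>\<^bsub>N\<^esub> \<mu>) h = act \<eta> h \<otimes>\<^bsub>N\<^esub> inv\<^bsub>N\<^esub> (act \<one>\<^bsub>N\<^esub> h) \<otimes>\<^bsub>N\<^esub> act \<mu> h"
    using sb assms(2) unfolding right_skew_bracoid_def by auto
  have cl: "\<And>x. x \<in> carrier N \<Longrightarrow> act x h \<in> carrier N"
    using tr assms(2) unfolding transitive_right_action_def by auto
  show ?thesis
  proof (rule homI)
    fix x assume "x \<in> carrier N"
    then show "bracoid_beta N act h x \<in> carrier N"
      using cl unfolding bracoid_beta_def by auto
  next
    fix x y assume x: "x \<in> carrier N" and y: "y \<in> carrier N"
    have a: "act x h \<in> carrier N" "act y h \<in> carrier N" "act \<one>\<^bsub>N\<^esub> h \<in> carrier N"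
      using cl x y by auto
    show "bracoid_beta N act h (x \<otimes>\<^bsub>N\<^esub> y) = bracoid_beta N act h x \<otimes>\<^bsub>N\<^esub> bracoid_beta N act h y"
      unfolding bracoid_beta_def using x y a
      by (simp add: hom inv_mult m_ac)
  qed
qed

end
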